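(* Let $n>1$ be an integer and $S=S_1\cup S_2\subseteq U_{6n}$ with $S_1=\{a^{2r}b,\ a^{2r}b^2\mid 1\le r\le n-1\}$ and $S_2=\{a^{2r+1}b\mid 0\le r\le n-1\}$. Then $\mathrm{Cay}(U_{6n},S)$ is a connected integral graph whose spectrum (eigenvalues with multiplicities) is $\{[1-2n]^2,[-2]^{2n-2},[1]^{4n-2},[n-2]^1,[3n-2]^1\}$.
   Context: For an integer $n\ge1$, $U_{6n}=\langle a,b\mid a^{2n}=b^3=1,\ a^{-1}ba=b^{-1}\rangle$, a group of order $6n$. For a group $G$ and $S\subseteq G$ with $1\notin S=S^{-1}$, the Cayley graph $\mathrm{Cay}(G,S)$ has vertex set $G$ and edges $\{g,sg\}$ for $g\in G,s\in S$. A graph is integral if all eigenvalues of its adjacency matrix are integers. $[\lambda]^m$ denotes eigenvalue $\lambda$ with multiplicity $m$. *)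

theory Defs
  imports "Jordan_Normal_Form.Char_Poly" "HOL-Library.Multiset"
begin

text \<open>The group U_{6n} = <a,b | a^(2n) = b^3 = 1, a^-1 b a = b^-1>.
  Every element has a unique normal form a^i b^j with 0 <= i < 2n, 0 <= j < 3,
  represented by the pair (i,j). From b a = a b^-1 we get b^j a^k = a^k b^((-1)^k j), so
  (a^i b^j)(a^k b^l) = a^(i+k) b^((-1)^k j + l).\<close>

definition U_carrier :: "nat \<Rightarrow> (nat \<times> nat) set" where
  "U_carrier n = {0..<2*n} \<times> {0..<3}"

fun U_mul :: "nat \<Rightarrow> nat \<times> nat \<Rightarrow> nat \<times> nat \<Rightarrow> nat \<times> nat" where
  "U_mul n (i, j) (k, l) = ((i + k) mod (2*n), ((if even k then j else 2*j) + l) mod 3)"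

definition U_one :: "nat \<times> nat" where "U_one = (0, 0)"

definition U_pow :: "nat \<Rightarrow> nat \<times> nat \<Rightarrow> nat \<Rightarrow> nat \<times> nat" where
  "U_pow n x k = ((U_mul n x) ^^ k) U_one"

definition U_a :: "nat \<times> nat" where "U_a = (1, 0)"
definition U_b :: "nat \<times> nat" where "U_b = (0, 1)"

definition cay_adj :: "('g \<Rightarrow> 'g \<Rightarrow> 'g) \<Rightarrow> 'g set \<Rightarrow> 'g \<Rightarrow> 'g \<Rightarrow> bool" where
  "cay_adj mul S g h \<longleftrightarrow> (\<exists>s\<in>S. h = mul s g \<or> g = mul s h)"

definition cay_connected :: "('g \<Rightarrow> 'g \<Rightarrow> 'g) \<Rightarrow> 'g set \<Rightarrow> 'g set \<Rightarrow> bool" where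
  "cay_connected mul G S \<longleftrightarrow>
     (\<forall>g\<in>G. \<forall>h\<in>G. (\<lambda>x y. x \<in> G \<and> y \<in> G \<and> cay_adj mul S x y)\<^sup>*\<^sup>* g h)"

definition U_elem :: "nat \<Rightarrow> nat \<times> nat" where
  "U_elem p = (p div 3, p mod 3)"

definition U_cay_adj_mat :: "nat \<Rightarrow> (nat \<times> nat) set \<Rightarrow> complex mat" where
  "U_cay_adj_mat n S = mat (6*n) (6*n)
     (\<lambda>(p, q). if cay_adj (U_mul n) S (U_elem p) (U_elem q) then 1 else 0)"

definition integral_mat :: "complex mat \<Rightarrow> bool" where
  "integral_mat A \<longleftrightarrow> (\<forall>k. eigenvalue A k \<longrightarrow> k \<in> \<int>)"

definition has_spectrum :: "complex mat \<Rightarrow> int multiset \<Rightarrow> bool" where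
  "has_spectrum A M \<longleftrightarrow> char_poly A = (\<Prod>x\<in>#M. [:- of_int x, 1:])"

end

theory Submission
  imports Defs
begin


lemma U_pow_a: "U_pow n U_a k = (k mod (2*n), 0)"
proof (induction k)
  case 0 then show ?case by (simp add: U_pow_def U_one_def)
next
  case (Suc k)
  have "U_pow n U_a (Suc k) = U_mul n U_a (U_pow n U_a k)" by (simp add: U_pow_def)
  also have "\<dots> = (Suc k mod (2*n), 0)" using Suc by (simp add: U_a_def mod_Suc_eq)
  finally show ?case .
qed

lemma U_pow_b2: "U_pow n U_b 2 = (0, 2)"
  by (simp add: U_pow_def U_one_def U_b_def numeral_2_eq_2)

lemma U_pow_b2': "U_pow n (0, Suc 0) 2 = (0, 2)"
  using U_pow_b2 by (simp add: U_b_def)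

definition Sset :: "nat \<Rightarrow> (nat \<times> nat) set" where
  "Sset n = {(a,b). a < 2*n \<and> b < 3 \<and> ((even a \<and> a \<noteq> 0 \<and> b \<noteq> 0) \<or> (odd a \<and> b = 1))}"

lemma S_eq:
  assumes "n > 1"
  shows "{U_mul n (U_pow n U_a (2*r)) U_b | r. 1 \<le> r \<and> r \<le> n - 1}
              \<union> {U_mul n (U_pow n U_a (2*r)) (U_pow n U_b 2) | r. 1 \<le> r \<and> r \<le> n - 1}
         \<union> {U_mul n (U_pow n U_a (2*r+1)) U_b | r. r \<le> n - 1} = Sset n" (is "?A = _")
proof (rule Set.set_eqI)
  fix x :: "nat \<times> nat"
  obtain a b where x: "x = (a,b)" by fastforce
  show "x \<in> ?A \<longleftrightarrow> x \<in> Sset n"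
  proof
    assume "x \<in> {U_mul n (U_pow n U_a (2*r)) U_b | r. 1 \<le> r \<and> r \<le> n - 1}
              \<union> {U_mul n (U_pow n U_a (2*r)) (U_pow n U_b 2) | r. 1 \<le> r \<and> r \<le> n - 1}
         \<union> {U_mul n (U_pow n U_a (2*r+1)) U_b | r. r \<le> n - 1}"
    then show "x \<in> Sset n" using assms
      by (auto simp: U_pow_a U_pow_b2 U_pow_b2' U_b_def Sset_def)
  next
    assume "x \<in> Sset n"
    then have ab: "a < 2*n" "b < 3" "(even a \<and> a \<noteq> 0 \<and> b \<noteq> 0) \<or> (odd a \<and> b = 1)"
      by (auto simp: Sset_def x)
    show "x \<in> {U_mul n (U_pow n U_a (2*r)) U_b | r. 1 \<le> r \<and> r \<le> n - 1}
              \<union> {U_mul n (U_pow n U_a (2*r)) (U_pow n U_b 2) | r. 1 \<le> r \<and> r \<le> n - 1}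
         \<union> {U_mul n (U_pow n U_a (2*r+1)) U_b | r. r \<le> n - 1}"
    proof (cases "even a")
      case True
      then obtain r where r: "a = 2*r" by auto
      have r1: "1 \<le> r" "r \<le> n - 1" using ab True r by auto
      have "b = 1 \<or> b = 2" using ab by auto
      then show ?thesis
      proof
        assume "b = 1"
        then have "x = U_mul n (U_pow n U_a (2*r)) U_b" using r ab
          by (simp add: x U_pow_a U_b_def)
        then show ?thesis using r1 by blast
      next
        assume "b = 2"
        then have "x = U_mul n (U_pow n U_a (2*r)) (U_pow n U_b 2)" using r ab
          by (simp add: x U_pow_a U_pow_b2)
        then show ?thesis using r1 by blast
      qed
    next
      case False
      then obtain r where r: "a = 2*r+1" by (metis oddE)
      have r1: "r \<le> n - 1" using ab r by auto
      have "x = U_mul n (U_pow n U_a (2*r+1)) U_b" using r ab False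
          by (simp add: x U_pow_a U_b_def)
      then show ?thesis using r1 by blast
    qed
  qed
qed

definition cond :: "nat \<Rightarrow> nat \<Rightarrow> nat \<Rightarrow> nat \<Rightarrow> bool" where
  "cond i j k l \<longleftrightarrow> (even i = even k \<and> i \<noteq> k \<and> j \<noteq> l) \<or> (even i \<and> odd k \<and> l = (j+1) mod 3)
     \<or> (odd i \<and> even k \<and> l = (j+2) mod 3)"

lemma mod2n: "(x::nat) < 2*n \<Longrightarrow> y < 2*n \<Longrightarrow> (x + y) mod (2*n) = (if x + y < 2*n then x + y else x + y - 2*n)"
  by (simp add: le_mod_geq )

lemma three_cases: "(j::nat) < 3 \<Longrightarrow> j = 0 \<or> j = 1 \<or> j = 2" by auto

lemma one_dir:
  assumes "n > 0" "i < 2*n" "k < 2*n" "j < 3" "l < 3"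
  shows "(\<exists>s\<in>Sset n. (k,l) = U_mul n s (i,j)) \<longleftrightarrow> cond i j k l"
proof
  assume "\<exists>s\<in>Sset n. (k,l) = U_mul n s (i,j)"
  then obtain s1 s2 where s: "(s1,s2) \<in> Sset n" "(k,l) = U_mul n (s1,s2) (i,j)" by auto
  have s1: "s1 < 2*n" "s2 < 3" "(even s1 \<and> s1 \<noteq> 0 \<and> s2 \<noteq> 0) \<or> (odd s1 \<and> s2 = 1)"
    using s(1) by (auto simp: Sset_def)
  have k: "k = (if s1 + i < 2*n then s1 + i else s1 + i - 2*n)"
    using s(2) mod2n[OF s1(1) assms(2)] by simp
  have l: "l = ((if even i then s2 else 2*s2) + j) mod 3" using s(2) by simp
  have par: "even k \<longleftrightarrow> (even s1 \<longleftrightarrow> even i)" using k s1(1) assms(2) by (auto; presburger)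
  have ik: "i = k \<longleftrightarrow> s1 = 0" using k s1(1) assms(2) by auto
  show "cond i j k l"
  proof (cases "even s1")
    case True
    then have "s2 = 1 \<or> s2 = 2" "s1 \<noteq> 0" using s1 by auto
    then have "l \<noteq> j" using l three_cases[OF assms(4)] by (cases "even i") auto
    then show ?thesis using True par ik \<open>s1 \<noteq> 0\<close> unfolding cond_def by auto
  next
    case False
    then have "s2 = 1" using s1 by auto
    then show ?thesis using False par l unfolding cond_def by (cases "even i") auto
  qed
next
  assume c: "cond i j k l"
  define s1 where "s1 = (if i \<le> k then k - i else k + 2*n - i)"
  have s1: "s1 < 2*n" "(s1 + i) mod (2*n) = k" "even s1 \<longleftrightarrow> (even i = even k)" "s1 = 0 \<longleftrightarrow> i = k"
    using assms unfolding s1_def by (auto simp: le_mod_geq; presburger)+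
  define s2 where "s2 = (if even s1 then (if even i then (l + 3 - j) mod 3 else (2*(l + 3 - j)) mod 3) else 1)"
  have "(s1,s2) \<in> Sset n" "(k,l) = U_mul n (s1,s2) (i,j)"
    using c s1 three_cases[OF assms(4)] three_cases[OF assms(5)] unfolding s2_def cond_def Sset_def
    by (auto; presburger)+
  then show "\<exists>s\<in>Sset n. (k,l) = U_mul n s (i,j)" by blast
qed



lemma cond_sym: assumes "j < 3" "l < 3" shows "cond k l i j \<longleftrightarrow> cond i j k l"
  unfolding cond_def using three_cases[OF assms(1)] three_cases[OF assms(2)] by (elim disjE; simp; blast)

lemma cay_adj_iff:
  assumes "n > 0" "i < 2*n" "k < 2*n" "j < 3" "l < 3"
  shows "cay_adj (U_mul n) (Sset n) (i,j) (k,l) \<longleftrightarrow> cond i j k l"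
proof -
  have "cay_adj (U_mul n) (Sset n) (i,j) (k,l) \<longleftrightarrow>
    (\<exists>s\<in>Sset n. (k,l) = U_mul n s (i,j)) \<or> (\<exists>s\<in>Sset n. (i,j) = U_mul n s (k,l))"
    unfolding cay_adj_def by blast
  also have "\<dots> \<longleftrightarrow> cond i j k l \<or> cond k l i j"
    using one_dir[OF assms] one_dir[OF assms(1,3,2,5,4)] by simp
  also have "\<dots> \<longleftrightarrow> cond i j k l" using cond_sym[OF assms(4,5)] by blast
  finally show ?thesis .
qed

definition aent :: "nat \<Rightarrow> nat \<Rightarrow> nat \<Rightarrow> nat \<Rightarrow> bool" where
  "aent m r m' r' \<longleftrightarrow> (if r div 3 = r' div 3 then m \<noteq> m' \<and> r \<noteq> r'
      else (if r < 3 then r' = 3 + (r+1) mod 3 else r' = (r+2) mod 3))"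

lemma six_cases: "(r::nat) < 6 \<Longrightarrow> r = 0 \<or> r = 1 \<or> r = 2 \<or> r = 3 \<or> r = 4 \<or> r = 5" by auto

lemma cond_aent:
  assumes "r < 6" "r' < 6"
  shows "cond (2*m + r div 3) (r mod 3) (2*m' + r' div 3) (r' mod 3) \<longleftrightarrow> aent m r m' r'"
  using six_cases[OF assms(1)] six_cases[OF assms(2)]
  by (elim disjE) (simp_all add: cond_def aent_def)

lemma U_elem_6: "r < 6 \<Longrightarrow> U_elem (6*m + r) = (2*m + r div 3, r mod 3)"
proof -
  assume r: "r < 6"
  have a: "6*m + r = r + 3*(2*m)" by simp
  have "(6*m + r) div 3 = 2*m + r div 3" unfolding a by simp
  moreover have "(6*m + r) mod 3 = r mod 3" by (subst a, rule mod_mult_self2)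
  ultimately show ?thesis unfolding U_elem_def by simp
qed

lemma adj_entry:
  assumes "n > 0" "p < 6*n" "q < 6*n"
  shows "cay_adj (U_mul n) (Sset n) (U_elem p) (U_elem q) \<longleftrightarrow> aent (p div 6) (p mod 6) (q div 6) (q mod 6)"
proof -
  have p: "p = 6*(p div 6) + p mod 6" and q: "q = 6*(q div 6) + q mod 6" by auto
  have r: "p mod 6 < 6" "q mod 6 < 6" by auto
  have d: "p div 6 < n" "q div 6 < n" using assms by (simp_all add: div_less_iff_less_mult mult.commute)
  have e: "p mod 6 div 3 \<le> 1" "q mod 6 div 3 \<le> 1"
    using six_cases[OF r(1)] six_cases[OF r(2)] by auto
  have i: "2*(p div 6) + p mod 6 div 3 < 2*n" "2*(q div 6) + q mod 6 div 3 < 2*n"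
    using d e by auto
  show ?thesis
    apply (subst p, subst q, unfold U_elem_6[OF r(1)] U_elem_6[OF r(2)])
    apply (subst cay_adj_iff[OF assms(1) i])
    using cond_aent[OF r] by auto
qed

lemma sum_split_add: "(\<Sum>q<a + (k::nat). f q) = (\<Sum>q<a. f q) + (\<Sum>r<k. f (a + r))"
  by (induction k) (simp_all add: ac_simps)

lemma sum_6n: "(\<Sum>q<6*(n::nat). f q) = (\<Sum>m<n. \<Sum>r<6. f (6*m + r))"
proof (induction n)
  case 0 then show ?case by simp
next
  case (Suc n)
  have e: "6 * Suc n = 6*n + 6" by simp
  show ?case unfolding e sum_split_add Suc.IH by simp
qed



definition hu :: "nat \<Rightarrow> nat \<Rightarrow> complex" where
  "hu t m = (if t = 0 then 1 else if m < t then 1 else if m = t then - of_nat t else 0)"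

definition hg :: "nat \<Rightarrow> nat \<Rightarrow> nat \<Rightarrow> complex" where
  "hg t k r = (if t = 0 then
     [[1,1,1,1,1,1],[1,1,1,-1,-1,-1],[1,-1,0,0,1,-1],[1,1,-2,-2,1,1],[1,-1,0,0,-1,1],[1,1,-2,2,-1,-1]] ! k ! r
   else [[1,1,1,0,0,0],[0,0,0,1,1,1],[1,-1,0,0,0,0],[1,1,-2,0,0,0],[0,0,0,1,-1,0],[0,0,0,1,1,-2]] ! k ! r)"

definition lamv :: "nat \<Rightarrow> nat \<Rightarrow> nat \<Rightarrow> int" where
  "lamv n t k = (if t = 0 then [3*int n-2, int n-2, 1, 1, 1-2*int n, 1-2*int n] ! k
     else [-2,-2,1,1,1,1] ! k)"

lemma sum6: "(\<Sum>r<6::nat. f r) = f 0 + f 1 + f 2 + f 3 + f 4 + f 5"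
  by (simp add: numeral_eq_Suc ac_simps)

lemma sum_trunc:
  assumes "T < (n::nat)" "\<And>m. T < m \<Longrightarrow> g m = 0"
  shows "(\<Sum>m<n. g m) = (\<Sum>m<T. g m) + g T"
proof -
  have "(\<Sum>m<n. g m) = (\<Sum>m<Suc T. g m)"
    by (rule sum.mono_neutral_right) (use assms in auto)
  then show ?thesis by simp
qed

lemma U0: "(\<Sum>m<n. hu 0 m) = of_nat n" by (simp add: hu_def)

lemma Ut: assumes "0 < t" "t < n" shows "(\<Sum>m<n. hu t m) = 0"
proof -
  have "(\<Sum>m<n. hu t m) = (\<Sum>m<t. hu t m) + hu t t"
    by (rule sum_trunc) (use assms in \<open>auto simp: hu_def\<close>)
  also have "(\<Sum>m<t. hu t m) = (\<Sum>m<t. 1)" by (rule sum.cong) (auto simp: hu_def)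
  finally show ?thesis using assms by (simp add: hu_def)
qed

lemma sum_neq: "(m::nat) < n \<Longrightarrow> (\<Sum>m'<n. if m \<noteq> m' then f m' else 0) = (\<Sum>m'<n. f m') - (f m :: complex)"
proof -
  assume m: "m < n"
  have "(\<Sum>m'<n. if m \<noteq> m' then f m' else 0) = (if m \<noteq> m then f m else 0) + (\<Sum>m'\<in>{..<n}-{m}. if m \<noteq> m' then f m' else 0)"
    by (rule sum.remove) (use m in auto)
  also have "(\<Sum>m'\<in>{..<n}-{m}. if m \<noteq> m' then f m' else 0) = (\<Sum>m'\<in>{..<n}-{m}. f m')"
    by (rule sum.cong) auto
  also have "(\<Sum>m'<n. f m') = f m + (\<Sum>m'\<in>{..<n}-{m}. f m')"
    by (rule sum.remove) (use m in auto)
  ultimately show ?thesis by simp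
qed

lemma inner_sum:
  assumes "m < n"
  shows "(\<Sum>m'<n. (if aent m r m' r' then 1 else 0) * (hu t m' * y)) =
    (if r div 3 = r' div 3 then (if r \<noteq> r' then ((\<Sum>m'<n. hu t m') - hu t m) * y else 0)
     else (if (if r < 3 then r' = 3 + (r+1) mod 3 else r' = (r+2) mod 3) then (\<Sum>m'<n. hu t m') * y else 0))"
proof (cases "r div 3 = r' div 3 \<and> r \<noteq> r'")
  case True
  then have "(\<Sum>m'<n. (if aent m r m' r' then 1 else 0) * (hu t m' * y)) =
    (\<Sum>m'<n. if m \<noteq> m' then hu t m' * y else 0)" by (intro sum.cong) (auto simp: aent_def)
  also have "\<dots> = (\<Sum>m'<n. hu t m' * y) - hu t m * y" by (rule sum_neq[OF assms])
  also have "(\<Sum>m'<n. hu t m' * y) = (\<Sum>m'<n. hu t m') * y" by (simp add: sum_distrib_right)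
  finally show ?thesis using True by (simp add: left_diff_distrib)
next
  case False
  then show ?thesis by (auto simp: aent_def sum_distrib_right)
qed

lemma KEY:
  assumes "m < n" "r < 6" "t < n" "k < 6"
  shows "(\<Sum>m'<n. \<Sum>r'<6. (if aent m r m' r' then 1 else 0) * (hu t m' * hg t k r'))
    = of_int (lamv n t k) * (hu t m * hg t k r)"
proof -
  have "(\<Sum>m'<n. \<Sum>r'<6. (if aent m r m' r' then 1 else 0) * (hu t m' * hg t k r'))
    = (\<Sum>r'<6. \<Sum>m'<n. (if aent m r m' r' then 1 else 0) * (hu t m' * hg t k r'))"
    by (rule sum.swap)
  also have "\<dots> = (\<Sum>r'<6. (if r div 3 = r' div 3 then (if r \<noteq> r' then ((\<Sum>m'<n. hu t m') - hu t m) * hg t k r' else 0)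
     else (if (if r < 3 then r' = 3 + (r+1) mod 3 else r' = (r+2) mod 3) then (\<Sum>m'<n. hu t m') * hg t k r' else 0)))"
    by (rule sum.cong[OF refl], rule inner_sum[OF assms(1)])
  also have "\<dots> = of_int (lamv n t k) * (hu t m * hg t k r)"
  proof (cases "t = 0")
    case True
    then show ?thesis using six_cases[OF assms(2)] six_cases[OF assms(4)]
      unfolding sum6 U0 by (elim disjE) (simp_all add: hg_def lamv_def hu_def algebra_simps)
  next
    case False
    have U: "(\<Sum>m'<n. hu t m') = 0" using Ut[OF _ assms(3)] False by simp
    show ?thesis using six_cases[OF assms(2)] six_cases[OF assms(4)] False
      unfolding sum6 U by (elim disjE) (simp_all add: hg_def lamv_def algebra_simps)
  qed
  finally show ?thesis .
qed



definition Ng :: "nat \<Rightarrow> nat \<Rightarrow> complex" where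
  "Ng t k = (if t = 0 then [6,6,4,12,4,12] ! k else [3,3,2,6,2,6] ! k)"

definition hn :: "nat \<Rightarrow> nat \<Rightarrow> complex" where
  "hn n t = (if t = 0 then of_nat n else of_nat (t + t*t))"

lemma hg_orth1: assumes "k < 6" "k' < 6" "t = 0 \<or> t = 1"
  shows "(\<Sum>r<6. hg t k r * hg t k' r) = (if k = k' then Ng t k else 0)"
  using six_cases[OF assms(1)] six_cases[OF assms(2)] assms(3)
  by (elim disjE) (simp_all add: sum6 hg_def Ng_def)

lemma hg_t: "t \<noteq> 0 \<Longrightarrow> hg t k r = hg 1 k r" by (simp add: hg_def)
lemma Ng_t: "t \<noteq> 0 \<Longrightarrow> Ng t k = Ng 1 k" by (simp add: Ng_def)

lemma hg_orth: assumes "k < 6" "k' < 6" shows "(\<Sum>r<6. hg t k r * hg t k' r) = (if k = k' then Ng t k else 0)"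
proof (cases "t = 0")
  case True then show ?thesis using hg_orth1[OF assms] by simp
next
  case False then show ?thesis unfolding hg_t[OF False] Ng_t[OF False] using hg_orth1[OF assms, of 1] by simp
qed

lemma hu_orth_le:
  assumes "t \<le> t'" "t' < n"
  shows "(\<Sum>m<n. hu t m * hu t' m) = (if t = t' then hn n t else 0)"
proof (cases "t' = 0")
  case True
  then show ?thesis using assms by (simp add: hu_def hn_def)
next
  case t'0: False
  show ?thesis
  proof (cases "t = 0")
    case True
    then show ?thesis using Ut[of t' n] t'0 assms by (simp add: hu_def)
  next
    case t0: False
    have "(\<Sum>m<n. hu t m * hu t' m) = (\<Sum>m<t. hu t m * hu t' m) + hu t t * hu t' t"
      by (rule sum_trunc) (use assms t0 in \<open>auto simp: hu_def\<close>)
    also have "(\<Sum>m<t. hu t m * hu t' m) = (\<Sum>m<t. 1)"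
      by (rule sum.cong) (use assms in \<open>auto simp: hu_def\<close>)
    finally show ?thesis using assms t0 t'0
      by (cases "t = t'") (auto simp: hu_def hn_def)
  qed
qed

lemma hu_orth:
  assumes "t < n" "t' < n"
  shows "(\<Sum>m<n. hu t m * hu t' m) = (if t = t' then hn n t else 0)"
proof (cases "t \<le> t'")
  case True then show ?thesis using hu_orth_le assms by blast
next
  case False
  then have "(\<Sum>m<n. hu t' m * hu t m) = (if t' = t then hn n t' else 0)"
    using hu_orth_le assms by simp
  then show ?thesis using False by (simp add: mult.commute)
qed

lemma mult_entry:
  assumes "A \<in> carrier_mat N N" "B \<in> carrier_mat N N" "i < N" "j < N"
  shows "(A * B) $$ (i,j) = (\<Sum>q<N. A $$ (i,q) * B $$ (q,j))"
  using assms by (simp add: scalar_prod_def atLeast0LessThan)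

definition Pm :: "nat \<Rightarrow> complex mat" where
  "Pm n = mat (6*n) (6*n) (\<lambda>(p,c). hu (c div 6) (p div 6) * hg (c div 6) (c mod 6) (p mod 6))"

definition Qm :: "nat \<Rightarrow> complex mat" where
  "Qm n = mat (6*n) (6*n) (\<lambda>(c,p). hu (c div 6) (p div 6) * hg (c div 6) (c mod 6) (p mod 6)
     / (hn n (c div 6) * Ng (c div 6) (c mod 6)))"

definition Dm :: "nat \<Rightarrow> complex mat" where
  "Dm n = mat_diag (6*n) (\<lambda>c. of_int (lamv n (c div 6) (c mod 6)))"

lemma carr: "Pm n \<in> carrier_mat (6*n) (6*n)" "Qm n \<in> carrier_mat (6*n) (6*n)"
  "Dm n \<in> carrier_mat (6*n) (6*n)"
  by (auto simp: Pm_def Qm_def Dm_def)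

lemma idx6: "m < n \<Longrightarrow> r < 6 \<Longrightarrow> 6*m + r < 6*(n::nat)" "(6*m + r) div 6 = m + r div 6" "(6*m+r) mod 6 = r mod 6"
  by auto

lemma divmod_lt: "c < 6*n \<Longrightarrow> c div 6 < (n::nat)" "c mod 6 < (6::nat)"
  by (auto simp: div_less_iff_less_mult mult.commute)

lemma c_eq: "(c::nat) = c' \<longleftrightarrow> c div 6 = c' div 6 \<and> c mod 6 = c' mod 6"
proof (rule iffI)
  assume h: "c div 6 = c' div 6 \<and> c mod 6 = c' mod 6"
  have "c = c div 6 * 6 + c mod 6" "c' = c' div 6 * 6 + c' mod 6" by simp_all
  then show "c = c'" using h by metis
qed simp

lemma hn_nz: assumes "0 < n" shows "hn n t \<noteq> 0"
proof (cases "t = 0")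
  case True then show ?thesis using assms by (simp add: hn_def)
next
  case False
  then have "t + t*t \<noteq> 0" by simp
  then have "of_nat (t + t*t) \<noteq> (0::complex)" by (metis of_nat_eq_0_iff)
  moreover have "hn n t = of_nat (t + t*t)" unfolding hn_def using False by (rule if_not_P)
  ultimately show ?thesis by simp
qed
lemma Ng_nz: "k < 6 \<Longrightarrow> Ng t k \<noteq> 0" using six_cases[of k] by (auto simp: Ng_def)

lemma QP: assumes "n > 0" shows "Qm n * Pm n = 1\<^sub>m (6*n)"
proof (rule eq_matI)
  fix c c' assume cc: "c < dim_row (1\<^sub>m (6*n))" "c' < dim_col (1\<^sub>m (6*n))"
  then have c: "c < 6*n" "c' < 6*n" by auto
  define t where "t = c div 6" define k where "k = c mod 6"
  define t' where "t' = c' div 6" define k' where "k' = c' mod 6"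
  have tk: "t < n" "k < 6" "t' < n" "k' < 6" using divmod_lt c unfolding t_def k_def t'_def k'_def by auto
  define N where "N = hn n t * Ng t k"
  have "(Qm n * Pm n) $$ (c,c') = (\<Sum>q<6*n. Qm n $$ (c,q) * Pm n $$ (q,c'))"
    by (rule mult_entry[OF carr(2,1) c])
  also have "\<dots> = (\<Sum>m<n. \<Sum>r<6. Qm n $$ (c,6*m+r) * Pm n $$ (6*m+r,c'))"
    by (rule sum_6n)
  also have "\<dots> = (\<Sum>m<n. \<Sum>r<6. (hu t m * hu t' m) * (hg t k r * hg t' k' r) / N)"
    by (intro sum.cong refl) (simp add: Qm_def Pm_def idx6 c t_def k_def t'_def k'_def N_def)
  also have "\<dots> = (\<Sum>m<n. hu t m * hu t' m) * (\<Sum>r<6. hg t k r * hg t' k' r) / N"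
    by (simp add: sum_product sum_divide_distrib)
  also have "\<dots> = 1\<^sub>m (6*n) $$ (c,c')"
  proof (cases "t = t'")
    case True
    have "N \<noteq> 0" unfolding N_def using hn_nz[OF assms] Ng_nz[OF tk(2)] by simp
    then show ?thesis using True hu_orth[OF tk(1,3)] hg_orth[OF tk(2,4)] c c_eq[of c c']
      unfolding t_def k_def t'_def k'_def N_def by auto
  next
    case False
    then show ?thesis using hu_orth[OF tk(1,3)] c c_eq[of c c']
      unfolding t_def k_def t'_def k'_def by auto
  qed
  finally show "(Qm n * Pm n) $$ (c,c') = 1\<^sub>m (6*n) $$ (c,c')" .
qed (auto simp: Qm_def Pm_def)



abbreviation Am :: "nat \<Rightarrow> complex mat" where "Am n \<equiv> U_cay_adj_mat n (Sset n)"

lemma carrA: "Am n \<in> carrier_mat (6*n) (6*n)" by (simp add: U_cay_adj_mat_def)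

lemma AP: assumes "n > 0" shows "Am n * Pm n = Pm n * Dm n"
proof (rule eq_matI)
  fix p c assume pc: "p < dim_row (Pm n * Dm n)" "c < dim_col (Pm n * Dm n)"
  then have pc: "p < 6*n" "c < 6*n" by (simp_all add: Pm_def Dm_def mat_diag_def)
  define t where "t = c div 6" define k where "k = c mod 6"
  define m where "m = p div 6" define r where "r = p mod 6"
  have tk: "t < n" "k < 6" "m < n" "r < 6" using divmod_lt pc unfolding t_def k_def m_def r_def by auto
  have "(Am n * Pm n) $$ (p,c) = (\<Sum>q<6*n. Am n $$ (p,q) * Pm n $$ (q,c))"
    by (rule mult_entry[OF carrA carr(1) pc])
  also have "\<dots> = (\<Sum>m'<n. \<Sum>r'<6. Am n $$ (p,6*m'+r') * Pm n $$ (6*m'+r',c))"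
    by (rule sum_6n)
  also have "\<dots> = (\<Sum>m'<n. \<Sum>r'<6. (if aent m r m' r' then 1 else 0) * (hu t m' * hg t k r'))"
  proof (intro sum.cong refl)
    fix m' r' assume "m' \<in> {..<n}" "r' \<in> {..<6::nat}"
    then have q: "6*m'+r' < 6*n" "(6*m'+r') div 6 = m'" "(6*m'+r') mod 6 = r'" by auto
    show "Am n $$ (p,6*m'+r') * Pm n $$ (6*m'+r',c) = (if aent m r m' r' then 1 else 0) * (hu t m' * hg t k r')"
      using adj_entry[OF assms pc(1) q(1)] q pc
      by (simp add: U_cay_adj_mat_def Pm_def m_def r_def t_def k_def)
  qed
  also have "\<dots> = of_int (lamv n t k) * (hu t m * hg t k r)" by (rule KEY[OF tk(3,4,1,2)])
  also have "\<dots> = (Pm n * Dm n) $$ (p,c)"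
  proof -
    have "Pm n * Dm n = mat (6*n) (6*n) (\<lambda>(i,j). Pm n $$ (i,j) * of_int (lamv n (j div 6) (j mod 6)))"
      unfolding Dm_def by (rule mat_diag_mult_right[OF carr(1)])
    then show ?thesis using pc by (simp add: Pm_def t_def k_def m_def r_def)
  qed
  finally show "(Am n * Pm n) $$ (p,c) = (Pm n * Dm n) $$ (p,c)" .
qed (auto simp: U_cay_adj_mat_def Pm_def Dm_def mat_diag_def)

lemma similar: assumes "n > 0" shows "similar_mat (Am n) (Dm n)"
proof -
  have PQ: "Pm n * Qm n = 1\<^sub>m (6*n)" by (rule mat_mult_left_right_inverse[OF carr(2,1) QP[OF assms]])
  have "Am n = Am n * (Pm n * Qm n)" using PQ by (simp add: U_cay_adj_mat_def)
  also have "\<dots> = (Am n * Pm n) * Qm n" by (rule assoc_mult_mat[symmetric, OF carrA carr(1) carr(2)])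
  also have "\<dots> = Pm n * Dm n * Qm n" using AP[OF assms] by simp
  finally have eq: "Am n = Pm n * Dm n * Qm n" .
  have dA: "dim_row (Am n) = 6*n" by (simp add: U_cay_adj_mat_def)
  have "similar_mat_wit (Am n) (Dm n) (Pm n) (Qm n)"
    unfolding similar_mat_wit_def Let_def dA
    by (simp add: carrA carr PQ QP[OF assms] eq[symmetric])
  then show ?thesis unfolding similar_mat_def by blast
qed

definition Lv :: "nat \<Rightarrow> nat \<Rightarrow> int" where "Lv n c = lamv n (c div 6) (c mod 6)"

lemma charD: "char_poly (Dm n) = (\<Prod>a\<leftarrow>map (\<lambda>c. of_int (Lv n c)) [0..<6*n]. [:- a, 1:])"
proof -
  have ut: "upper_triangular (Dm n)" by (simp add: upper_triangular_def Dm_def mat_diag_def)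
  have "diag_mat (Dm n) = map (\<lambda>c. of_int (Lv n c)) [0..<6*n]"
    by (simp add: diag_mat_def Dm_def mat_diag_def Lv_def)
  then show ?thesis using char_poly_upper_triangular[OF carr(3) ut] by simp
qed

lemma upt6: "[a..<a+6] = [a, a+1, a+2, a+3, a+4, a+5]"
  by (simp add: numeral_eq_Suc upt_rec)

lemma blocks: "mset (map (Lv n) [6..<6 + 6*N]) = replicate_mset (2*N) (-2) + replicate_mset (4*N) 1"
proof (induction N)
  case 0 then show ?case by simp
next
  case (Suc N)
  have e: "6 + 6 * Suc N = (6 + 6*N) + 6" by simp
  have v: "i < 6 \<Longrightarrow> Lv n (6 + 6*N + i) = [-2,-2,1,1,1,1] ! i" for i
  proof -
    assume "i < 6"
    have a: "6 + 6*N + i = i + 6*(Suc N)" by simp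
    have "(6 + 6*N + i) div 6 = Suc N" "(6 + 6*N + i) mod 6 = i"
      by (subst a, subst div_mult_self2, simp, simp add: \<open>i < 6\<close>)
         (subst a, subst mod_mult_self2, simp add: \<open>i < 6\<close>)
    then show ?thesis by (simp add: Lv_def lamv_def)
  qed
  have "map (Lv n) [6 + 6*N..<(6 + 6*N) + 6] = [-2,-2,1,1,1,1]"
    unfolding upt6 using v[of 0] v[of 1] v[of 2] v[of 3] v[of 4] v[of 5] by (simp add: ac_simps)
  note L = this
  have sp: "[6..<6 + 6*Suc N] = [6..<6+6*N] @ [6+6*N..<(6+6*N)+6]"
    by (simp only: e, rule upt_add_eq_append, simp)
  have "mset (map (Lv n) [6..<6 + 6*Suc N]) = (replicate_mset (2*N) (-2) + replicate_mset (4*N) 1) + mset [-2,-2,1,1,1,1]"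
    by (simp only: sp map_append mset_append Suc.IH L)
  moreover have r: "2*Suc N = Suc (Suc (2*N))" "4 * Suc N = Suc (Suc (Suc (Suc (4*N))))" by simp_all
  ultimately show ?case unfolding r by (simp add: add_mset_commute)
qed

lemma mset_L: assumes "n > 0"
  shows "mset (map (Lv n) [0..<6*n]) = replicate_mset 2 (1 - 2 * int n) + replicate_mset (2*n-2) (-2)
            + replicate_mset (4*n-2) 1 + {# int n - 2 #} + {# 3 * int n - 2 #}"
proof -
  obtain N where N: "n = Suc N" using assms by (cases n) auto
  have e: "6*n = 6 + 6*N" using N by simp
  have sp: "[0..<6*n] = [0..<6] @ [6..<6 + 6*N]" unfolding e by (rule upt_add_eq_append) simp
  have u6: "[0..<6] = [0,1,2,3,4,5::nat]" by (simp add: upt_rec)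
  have mp: "map (Lv n) [0..<6] = [3*int n-2, int n-2, 1, 1, 1-2*int n, 1-2*int n]"
    unfolding u6 by (simp add: Lv_def lamv_def)
  have m: "mset (map (Lv n) [0..<6*n]) = mset [3*int n-2, int n-2, 1, 1, 1-2*int n, 1-2*int n]
      + (replicate_mset (2*N) (-2) + replicate_mset (4*N) 1)"
    unfolding sp map_append mset_append mp blocks[of n N] ..
  have r: "2*n - 2 = 2*N" "4*n-2 = Suc (Suc (4*N))" using N by simp_all
  have r2: "replicate_mset 2 x = {#x, x#}" for x :: int by (simp add: numeral_2_eq_2)
  show ?thesis unfolding m r r2 by (simp add: add_mset_commute)
qed



definition Rrel :: "nat \<Rightarrow> nat \<times> nat \<Rightarrow> nat \<times> nat \<Rightarrow> bool" where
  "Rrel n x y \<longleftrightarrow> x \<in> U_carrier n \<and> y \<in> U_carrier n \<and> cay_adj (U_mul n) (Sset n) x y"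

lemma Rrel_eq: "(\<lambda>x y. x \<in> U_carrier n \<and> y \<in> U_carrier n \<and> cay_adj (U_mul n) (Sset n) x y) = Rrel n"
  by (intro ext) (simp add: Rrel_def)

lemma edge:
  assumes "n > 1" "i < 2*n" "j < 3" "k < 2*n" "l < 3" "cond i j k l"
  shows "Rrel n (i,j) (k,l)"
  using assms cay_adj_iff[of n i k j l] by (simp add: U_carrier_def Rrel_def)

lemma to_zero:
  assumes "n > 1" "g \<in> U_carrier n"
  shows "(Rrel n)\<^sup>*\<^sup>* g (0,0)"
proof -
  let ?R = "Rrel n"
  obtain i j where g: "g = (i,j)" "i < 2*n" "j < 3" using assms(2) by (auto simp: U_carrier_def)
  have n2: "2 < 2*n" "1 < 2*n" "0 < 2*n" using assms by auto
  have e11: "?R (1,1) (0,0)" by (rule edge) (use assms n2 in \<open>auto simp: cond_def\<close>)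
  have evenc: "?R\<^sup>*\<^sup>* (a,0) (0,0)" if "even a" "a \<noteq> 0" "a < 2*n" for a
  proof -
    have "?R (a,0) (1,1)" by (rule edge) (use assms n2 that in \<open>auto simp: cond_def\<close>)
    then show ?thesis using e11 by (meson converse_rtranclp_into_rtranclp r_into_rtranclp)
  qed
  have zeroc: "?R\<^sup>*\<^sup>* (0,b) (0,0)" if "b < 3" for b
  proof (cases "b = 0")
    case True then show ?thesis by simp
  next
    case False
    have "?R (0,b) (2,0)" by (rule edge) (use assms n2 that False in \<open>auto simp: cond_def\<close>)
    moreover have "?R\<^sup>*\<^sup>* (2,0) (0,0)" by (rule evenc) (use n2 in auto)
    ultimately show ?thesis by (rule converse_rtranclp_into_rtranclp)
  qed
  show ?thesis
  proof (cases "even i")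
    case True
    show ?thesis
    proof (cases "i = 0")
      case True then show ?thesis using zeroc g by simp
    next
      case False
      show ?thesis
      proof (cases "j = 0")
        case True then show ?thesis using evenc[of i] g \<open>even i\<close> False by simp
      next
        case j: False
        have "?R (i,j) (0,0)" by (rule edge) (use assms n2 g \<open>even i\<close> False j in \<open>auto simp: cond_def\<close>)
        then show ?thesis using g by simp
      qed
    qed
  next
    case False
    have "?R (i,j) (0,(j+2) mod 3)" by (rule edge) (use assms n2 g False in \<open>auto simp: cond_def\<close>)
    moreover have "?R\<^sup>*\<^sup>* (0,(j+2) mod 3) (0,0)" by (rule zeroc) simp
    ultimately show ?thesis using g by (meson converse_rtranclp_into_rtranclp)
  qed
qed

lemma connected: assumes "n > 1" shows "cay_connected (U_mul n) (U_carrier n) (Sset n)"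
  unfolding cay_connected_def Rrel_eq
proof (intro ballI)
  fix g h assume gh: "g \<in> U_carrier n" "h \<in> U_carrier n"
  let ?R = "Rrel n"
  have sym: "?R x y \<Longrightarrow> ?R y x" for x y unfolding cay_adj_def Rrel_def by blast
  have "?R\<^sup>*\<^sup>* (0,0) h"
  proof -
    have "?R\<^sup>*\<^sup>* h (0,0)" by (rule to_zero[OF assms gh(2)])
    then show ?thesis
    proof (induction rule: rtranclp_induct)
      case base then show ?case by simp
    next
      case (step y z) then show ?case using sym by (meson converse_rtranclp_into_rtranclp)
    qed
  qed
  then show "?R\<^sup>*\<^sup>* g h" using to_zero[OF assms gh(1)] by (meson rtranclp_trans)
qed

lemma prod_list_mset: "(\<Prod>a\<leftarrow>map (\<lambda>c. of_int (L c)) xs. [:- a, 1:]) = (\<Prod>x\<in>#mset (map L xs). [:- (of_int x :: complex), 1:])"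
  by (induction xs) auto

theorem main:
  assumes "n > 1"
  shows "cay_connected (U_mul n) (U_carrier n) (Sset n)
       \<and> integral_mat (Am n)
       \<and> has_spectrum (Am n)
           (replicate_mset 2 (1 - 2 * int n) + replicate_mset (2*n-2) (-2)
            + replicate_mset (4*n-2) 1 + {# int n - 2 #} + {# 3 * int n - 2 #})"
proof -
  have n0: "n > 0" using assms by simp
  have cp: "char_poly (Am n) = (\<Prod>a\<leftarrow>map (\<lambda>c. of_int (Lv n c)) [0..<6*n]. [:- a, 1:])"
    using char_poly_similar[OF similar[OF n0]] charD by simp
  have spec: "has_spectrum (Am n)
           (replicate_mset 2 (1 - 2 * int n) + replicate_mset (2*n-2) (-2)
            + replicate_mset (4*n-2) 1 + {# int n - 2 #} + {# 3 * int n - 2 #})"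
    unfolding has_spectrum_def cp prod_list_mset mset_L[OF n0, symmetric] ..
  have int: "integral_mat (Am n)"
    unfolding integral_mat_def
  proof (intro allI impI)
    fix k assume "eigenvalue (Am n) k"
    then have "poly (char_poly (Am n)) k = 0" using eigenvalue_root_char_poly[OF carrA] by blast
    then have "(\<Prod>a\<leftarrow>map (\<lambda>c. of_int (Lv n c)) [0..<6*n]. poly [:- a, 1:] k) = 0"
      unfolding cp poly_prod_list by (simp add: o_def)
    then obtain c where "poly [:- of_int (Lv n c), 1:] k = 0"
      by (auto simp: prod_list_zero_iff)
    then have "k = of_int (Lv n c)" by simp
    then show "k \<in> \<int>" by simp
  qed
  show ?thesis using connected[OF assms] int spec by blast
qed


theorem corollary4p5:
  fixes n :: nat
  assumes "n > 1"
  defines "S1 \<equiv> {U_mul n (U_pow n U_a (2*r)) U_b | r. 1 \<le> r \<and> r \<le> n - 1}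
              \<union> {U_mul n (U_pow n U_a (2*r)) (U_pow n U_b 2) | r. 1 \<le> r \<and> r \<le> n - 1}"
  defines "S2 \<equiv> {U_mul n (U_pow n U_a (2*r+1)) U_b | r. r \<le> n - 1}"
  defines "S \<equiv> S1 \<union> S2"
  shows "cay_connected (U_mul n) (U_carrier n) S
       \<and> integral_mat (U_cay_adj_mat n S)
       \<and> has_spectrum (U_cay_adj_mat n S)
           (replicate_mset 2 (1 - 2 * int n) + replicate_mset (2*n-2) (-2)
            + replicate_mset (4*n-2) 1 + {# int n - 2 #} + {# 3 * int n - 2 #})"
proof -
  have "S = Sset n" using S_eq[OF assms(1)] unfolding S_def S1_def S2_def by simp
  then show ?thesis using main[OF assms(1)] by simp
qed

end
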